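(* Let $p\in[1,\infty]$ with conjugate $p^*$, $\gamma_{\{1\}}\ge0$, and let $\mathrm{QMC}^{\mathrm{MP}}_{1,n}(f)=\frac1n\sum_{j=1}^nf\big(\frac{2j-1}{2n}\big)$ be the composite midpoint rule. Then \[\mathrm{error}(\mathrm{QMC}^{\mathrm{MP}}_{1,n};\mathcal{F}_1)=\frac{\gamma_{\{1\}}}{2(p^*+1)^{1/p^*}n},\] with the convention $(p^*+1)^{1/p^*}=1$ for $p^*=\infty$. Moreover, \[\mathrm{error}(\mathrm{QMC}^{\mathrm{MP}}_{1,n};\mathcal{F}_1)=\min\{\mathrm{error}(\mathrm{QMC}_{1,k};\mathcal{F}_1): k\le n,\ \mathrm{QMC}_{1,k}\text{ a QMC rule with }k\text{ nodes in }[0,1]\}.\]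
   Context: $1/p+1/p^*=1$. $K(x,t)=t$ if $x\ge t$ and $t-1$ if $x<t$. The one-dimensional weighted ANOVA space $\mathcal{F}_1=\mathcal{F}_{1,p,\boldsymbol\gamma}$ with weights $\gamma_\emptyset,\gamma_{\{1\}}\ge0$ consists of the functions $f=f_\emptyset+f_{\{1\}}$, where $f_\emptyset$ is a constant (present only if $\gamma_\emptyset>0$) and $f_{\{1\}}(x)=\int_0^1h(t)K(x,t)\,\mathrm{d}t$ with $h\in L_p([0,1])$ (present only if $\gamma_{\{1\}}>0$), normed by $(\gamma_\emptyset^{-p}|f_\emptyset|^p+\gamma_{\{1\}}^{-p}\|h\|_{L_p}^p)^{1/p}$ (max version for $p=\infty$; terms with zero weight omitted). A QMC rule with $k$ nodes $x_1,\dots,x_k\in[0,1]$ is $\mathrm{QMC}_{1,k}(f)=\frac1k\sum_{j=1}^kf(x_j)$; worst case error $\mathrm{error}(\mathrm{QMC}_{1,k};\mathcal{F}_1)=\sup_{\|f\|_{\mathcal{F}_1}\le1}|\int_0^1f-\mathrm{QMC}_{1,k}(f)|$. *)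

theory Defs
  imports "HOL-Analysis.Analysis"
begin

definition K :: "real \<Rightarrow> real \<Rightarrow> real" where
  "K x t = (if x \<ge> t then t else t - 1)"

definition f1_of :: "(real \<Rightarrow> real) \<Rightarrow> real \<Rightarrow> real" where
  "f1_of h x = integral\<^sup>L (lebesgue_on {0..1}) (\<lambda>t. h t * K x t)"

definition conj_exp :: "ereal \<Rightarrow> ereal" where
  "conj_exp p = (if p = 1 then \<infinity> else if p = \<infinity> then 1 else p / (p - 1))"

text \<open>Weighted term gamma^{-p} a of the p-th power of the norm (finite p);
  a term with zero weight is omitted, i.e. the component must vanish.\<close>
definition wterm :: "real \<Rightarrow> real \<Rightarrow> ennreal \<Rightarrow> ennreal" where
  "wterm p \<gamma> a = (if \<gamma> = 0 then (if a = 0 then 0 else top) else ennreal (\<gamma> powr (-p)) * a)"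

text \<open>Unit ball of the weighted space F_{1,p,gamma}: functions f = c + f_{1}
  with h in L_p([0,1]) and norm at most 1.  For finite p, the condition
  norm <= 1 is written as (norm)^p <= 1; for p = infinity as the max version.\<close>
definition unit_ball :: "ereal \<Rightarrow> real \<Rightarrow> real \<Rightarrow> (real \<Rightarrow> real) set" where
  "unit_ball p g0 g1 = {f. \<exists>c h. h \<in> borel_measurable (lebesgue_on {0..1}) \<and>
      f = (\<lambda>x. c + f1_of h x) \<and>
      (if p = \<infinity> then \<bar>c\<bar> \<le> g0 \<and> (AE t in lebesgue_on {0..1}. \<bar>h t\<bar> \<le> g1)
       else wterm (real_of_ereal p) g0 (ennreal (\<bar>c\<bar> powr real_of_ereal p))
          + wterm (real_of_ereal p) g1
              (\<integral>\<^sup>+ t. ennreal (\<bar>h t\<bar> powr real_of_ereal p) \<partial>lebesgue_on {0..1}) \<le> 1)}"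

definition QMC :: "nat \<Rightarrow> (nat \<Rightarrow> real) \<Rightarrow> (real \<Rightarrow> real) \<Rightarrow> real" where
  "QMC k x f = (1 / real k) * (\<Sum>j = 1..k. f (x j))"

definition qmc_error :: "ereal \<Rightarrow> real \<Rightarrow> real \<Rightarrow> nat \<Rightarrow> (nat \<Rightarrow> real) \<Rightarrow> ereal" where
  "qmc_error p g0 g1 k x =
     (SUP f \<in> unit_ball p g0 g1. ereal \<bar>integral\<^sup>L (lebesgue_on {0..1}) f - QMC k x f\<bar>)"

definition mp_nodes :: "nat \<Rightarrow> nat \<Rightarrow> real" where
  "mp_nodes n j = (2 * real j - 1) / (2 * real n)"

definition mp_const :: "ereal \<Rightarrow> real" where
  "mp_const p = (if conj_exp p = \<infinity> then 1
     else (real_of_ereal (conj_exp p) + 1) powr (1 / real_of_ereal (conj_exp p)))"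

end

theory Submission
  imports Defs "HOL-Real_Asymp.Real_Asymp"
begin

abbreviation "M01 \<equiv> lebesgue_on {0..1::real}"

lemma fin_M01: "finite_measure M01"
  by (rule finite_measure_lebesgue_on) auto

interpretation M01: finite_measure M01 by (rule fin_M01)

interpretation P01: pair_sigma_finite M01 M01
  by unfold_locales

lemma id_M01[measurable]: "(\<lambda>x::real. x) \<in> borel_measurable M01"
  by (rule continuous_imp_measurable_on_sets_lebesgue) (auto intro: continuous_intros)

lemma fst_M01[measurable]: "(\<lambda>z. fst z) \<in> borel_measurable (M01 \<Otimes>\<^sub>M M01)"
  by (rule measurable_compose[OF measurable_fst id_M01])
lemma snd_M01[measurable]: "(\<lambda>z. snd z) \<in> borel_measurable (M01 \<Otimes>\<^sub>M M01)"
  by (rule measurable_compose[OF measurable_snd id_M01])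

lemma K_meas2[measurable]: "(\<lambda>z. K (fst z) (snd z)) \<in> borel_measurable (M01 \<Otimes>\<^sub>M M01)"
  unfolding K_def by measurable

lemma K_meas[measurable]: "(\<lambda>t. K a t) \<in> borel_measurable M01"
  unfolding K_def by measurable

lemma K_meas'[measurable]: "(\<lambda>x. K x t) \<in> borel_measurable M01"
  unfolding K_def by measurable

lemma K_bound: "\<bar>K x t\<bar> \<le> 1" if "t \<in> {0..1}" using that by (auto simp: K_def)

lemma space_M01[simp]: "space M01 = {0..1}" by simp

lemma measure_M01_UNIV: "measure M01 {0..1} = 1"
  by (simp add: measure_restrict_space)

lemma int_K_x: "integral\<^sup>L M01 (\<lambda>x. K x t) = 0" if "t \<in> {0..1}"
proof -
  have eq: "K x t = t - indicator {0..<t} x" if "x \<in> {0..1}" for x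
    using that by (auto simp: K_def indicator_def)
  have "integral\<^sup>L M01 (\<lambda>x. K x t) = integral\<^sup>L M01 (\<lambda>x. t - indicator {0..<t} x)"
    by (rule Bochner_Integration.integral_cong) (auto simp: eq)
  also have "\<dots> = t * measure M01 {0..1} - integral\<^sup>L M01 (indicator {0..<t})"
  proof (subst Bochner_Integration.integral_diff)
    show "integrable M01 (indicator {0..<t} :: real \<Rightarrow> real)"
      using that by (intro integrable_real_indicator) (auto simp: sets_restrict_space_iff M01.emeasure_real less_top[symmetric])
  qed (auto simp: measure_restrict_space M01.emeasure_real)
  also have "integral\<^sup>L M01 (indicator {0..<t}) = t"
  proof -
    have "{0..<t} \<inter> {0..1} = {0..<t}" using that by auto
    have "measure M01 {0..<t} = measure lebesgue {0..<t}"
      using that by (subst measure_restrict_space) auto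
    also have "\<dots> = measure lborel {0..<t}" by simp
    also have "\<dots> = t" using that by (simp add: measure_def)
    finally show ?thesis using \<open>{0..<t} \<inter> {0..1} = {0..<t}\<close> by simp
  qed
  finally show ?thesis by (simp add: measure_M01_UNIV)
qed


lemma f1_int:
  assumes hm[measurable]: "h \<in> borel_measurable M01" and hi: "integrable M01 h"
  shows "integrable M01 (f1_of h)" "integral\<^sup>L M01 (f1_of h) = 0"
proof -
  have hm2[measurable]: "(\<lambda>z. h (fst z)) \<in> borel_measurable (M01 \<Otimes>\<^sub>M M01)"
    by (rule measurable_compose[OF measurable_fst hm])
  have fm[measurable]: "(\<lambda>(t,x). h t * K x t) \<in> borel_measurable (M01 \<Otimes>\<^sub>M M01)"
    unfolding K_def split_beta by measurable
  have int: "integrable (M01 \<Otimes>\<^sub>M M01) (\<lambda>(t,x). h t * K x t)"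
  proof (rule P01.Fubini_integrable[OF fm])
    show "integrable M01 (\<lambda>t. \<integral>x. norm ((\<lambda>(t,x). h t * K x t) (t, x)) \<partial>M01)"
    proof (rule Bochner_Integration.integrable_bound[OF hi])
      show "(\<lambda>t. \<integral>x. norm ((\<lambda>(t,x). h t * K x t) (t, x)) \<partial>M01) \<in> borel_measurable M01"
        by measurable
      show "AE t in M01. norm (\<integral>x. norm ((\<lambda>(t,x). h t * K x t) (t, x)) \<partial>M01) \<le> norm (h t)"
      proof (rule AE_I2)
        fix t assume t: "t \<in> space M01"
        have "(\<integral>x. \<bar>K x t\<bar> \<partial>M01) \<le> (\<integral>x. 1 \<partial>M01)"
          by (rule integral_mono) (use t K_bound in \<open>auto simp: M01.emeasure_real less_top[symmetric] intro!: M01.integrable_const_bound[where B=1]\<close>)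
        also have "\<dots> = 1" by (simp add: measure_M01_UNIV)
        finally have le: "(\<integral>x. \<bar>K x t\<bar> \<partial>M01) \<le> 1" .
        have "(\<integral>x. norm ((\<lambda>(t,x). h t * K x t) (t, x)) \<partial>M01) = \<bar>h t\<bar> * (\<integral>x. \<bar>K x t\<bar> \<partial>M01)"
          by (simp add: abs_mult)
        also have "\<dots> \<le> \<bar>h t\<bar>" using le by (simp add: mult_left_le)
        finally show "norm (\<integral>x. norm ((\<lambda>(t,x). h t * K x t) (t, x)) \<partial>M01) \<le> norm (h t)"
          by (simp add: integral_nonneg_AE)
      qed
    qed
    show "AE t in M01. integrable M01 (\<lambda>x. (\<lambda>(t,x). h t * K x t) (t, x))"
    proof (rule AE_I2)
      fix t assume t: "t \<in> space M01"
      show "integrable M01 (\<lambda>x. (\<lambda>(t,x). h t * K x t) (t, x))"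
        by (rule M01.integrable_const_bound[where B="\<bar>h t\<bar>"])
           (use t K_bound in \<open>auto simp: abs_mult intro!: mult_left_le\<close>)
    qed
  qed
  have e1: "(\<integral>t. (\<integral>x. h t * K x t \<partial>M01) \<partial>M01) = integral\<^sup>L (M01 \<Otimes>\<^sub>M M01) (\<lambda>(t,x). h t * K x t)"
    by (rule P01.integral_fst[OF int])
  have e2: "(\<integral>x. (\<integral>t. h t * K x t \<partial>M01) \<partial>M01) = integral\<^sup>L (M01 \<Otimes>\<^sub>M M01) (\<lambda>(t,x). h t * K x t)"
    by (rule P01.integral_snd[OF int])
  show "integrable M01 (f1_of h)"
    unfolding f1_of_def using P01.integrable_snd[OF int] by simp
  have "(\<integral>t. (\<integral>x. h t * K x t \<partial>M01) \<partial>M01) = (\<integral>t. 0 \<partial>M01)"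
    by (rule Bochner_Integration.integral_cong) (auto simp: int_K_x)
  then show "integral\<^sup>L M01 (f1_of h) = 0"
    unfolding f1_of_def using e1 e2 by simp
qed


definition Dk :: "nat \<Rightarrow> (nat \<Rightarrow> real) \<Rightarrow> real \<Rightarrow> real" where
  "Dk k x t = (1 / real k) * (\<Sum>j = 1..k. K (x j) t)"

lemma Dk_meas[measurable]: "Dk k x \<in> borel_measurable M01"
  unfolding Dk_def by measurable

lemma K_abs_le: "\<bar>K a t\<bar> \<le> 1" if "t \<in> {0..1}" using that by (auto simp: K_def)

lemma Dk_bound: "\<bar>Dk k x t\<bar> \<le> 1" if "t \<in> {0..1}"
proof (cases "k = 0")
  case True then show ?thesis by (simp add: Dk_def)
next
  case False
  have "\<bar>\<Sum>j = 1..k. K (x j) t\<bar> \<le> (\<Sum>j = 1..k. 1)"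
    by (rule order_trans[OF sum_abs sum_mono]) (use that K_abs_le in auto)
  then show ?thesis using False by (simp add: Dk_def abs_mult divide_le_eq)
qed

lemma err_formula:
  assumes hm[measurable]: "h \<in> borel_measurable M01" and hi: "integrable M01 h" and k: "k \<ge> 1"
  shows "integral\<^sup>L M01 (\<lambda>y. c + f1_of h y) - QMC k x (\<lambda>y. c + f1_of h y)
          = - integral\<^sup>L M01 (\<lambda>t. h t * Dk k x t)"
proof -
  have intK: "integrable M01 (\<lambda>t. h t * K a t)" for a
    by (rule Bochner_Integration.integrable_bound[OF hi]) (auto simp: abs_mult intro!: mult_left_le K_abs_le)
  have "integral\<^sup>L M01 (\<lambda>y. c + f1_of h y) = c"
    using f1_int[OF hm hi] by (simp add: measure_M01_UNIV)
  moreover have "QMC k x (\<lambda>y. c + f1_of h y) = c + integral\<^sup>L M01 (\<lambda>t. h t * Dk k x t)"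
  proof -
    have "integral\<^sup>L M01 (\<lambda>t. h t * Dk k x t) = (1 / real k) * (\<Sum>j = 1..k. integral\<^sup>L M01 (\<lambda>t. h t * K (x j) t))"
      unfolding Dk_def
      by (simp add: sum_distrib_left mult.left_commute intK Bochner_Integration.integral_sum)
    then show ?thesis using k
      by (simp add: QMC_def f1_of_def sum.distrib sum_distrib_left field_simps)
  qed
  ultimately show ?thesis by simp
qed

definition dg :: "nat \<Rightarrow> real \<Rightarrow> real" where
  "dg k t = \<bar>real k * t - of_int (round (real k * t))\<bar> / real k"

lemma round_near: fixes z :: real
  assumes "\<bar>z - of_int m\<bar> \<le> 1/2" shows "\<bar>z - of_int (round z)\<bar> = \<bar>z - of_int m\<bar>"
proof (cases "round z = m")
  case False
  then have "\<bar>of_int m - of_int (round z)\<bar> \<ge> (1::real)"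
    by (metis abs_le_zero_iff linorder_not_le of_int_abs of_int_diff of_int_less_1_iff right_minus_eq zero_less_abs_iff int_one_le_iff_zero_less)
  moreover have "\<bar>z - of_int (round z)\<bar> \<le> 1/2"
    unfolding abs_le_iff using of_int_round_le[of z] of_int_round_ge[of z] by linarith
  ultimately have "\<bar>z - of_int (round z)\<bar> \<ge> \<bar>z - of_int m\<bar>" using assms by linarith
  with round_diff_minimal[of z m] show ?thesis by linarith
qed simp

lemma Dk_ge: assumes "k \<ge> 1" shows "dg k t \<le> \<bar>Dk k x t\<bar>"
proof -
  have "(\<Sum>j = 1..k. K (x j) t) = (\<Sum>j = 1..k. t - of_bool (x j < t))"
    by (rule sum.cong) (auto simp: K_def)
  also have "\<dots> = real k * t - (\<Sum>j = 1..k. of_bool (x j < t))"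
    unfolding sum_subtractf by simp
  also have "(\<Sum>j = 1..k. of_bool (x j < t)) = real (\<Sum>j = 1..k. of_bool (x j < t))"
    by (simp add: of_nat_sum)
  finally have eq: "(\<Sum>j = 1..k. K (x j) t) = real k * t - of_int (int (\<Sum>j = 1..k. of_bool (x j < t)))"
    by simp
  have "\<bar>real k * t - of_int (round (real k * t))\<bar> \<le> \<bar>(\<Sum>j = 1..k. K (x j) t)\<bar>"
    unfolding eq by (rule round_diff_minimal)
  then show ?thesis using assms
    by (simp add: dg_def Dk_def abs_mult divide_right_mono)
qed


lemma Dmp_le:
  assumes n: "n \<ge> 1" and t: "t \<in> {0..1}"
  shows "\<bar>Dk n (mp_nodes n) t\<bar> \<le> dg n t"
proof -
  define u where "u = real n * t + 1/2"
  define C where "C = \<lceil>u\<rceil>"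
  have u0: "u > 0" "u \<le> real n + 1/2" using t n by (auto simp: u_def mult_left_le add_nonneg_pos)
  have C1: "C \<ge> 1" using u0 by (simp add: C_def)
  have Cu: "real_of_int C - 1 < u" "u \<le> real_of_int C" using ceiling_correct[of u] by (auto simp: C_def)
  define N where "N = nat C - 1"
  have NC: "int N = C - 1" using C1 by (simp add: N_def)
  have set_eq: "{j \<in> {1..n}. mp_nodes n j < t} = {1..N}"
  proof (intro set_eqI iffI)
    fix j assume "j \<in> {j \<in> {1..n}. mp_nodes n j < t}"
    then have j: "1 \<le> j" "(2 * real j - 1) / (2 * real n) < t" by (auto simp: mp_nodes_def)
    then have "2 * real j - 1 < t * (2 * real n)" using n by (simp add: divide_less_eq)
    then have "real j < u" by (simp add: u_def algebra_simps)
    then have "int j < C" by (simp add: C_def less_ceiling_iff)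
    then show "j \<in> {1..N}" using j NC by auto
  next
    fix j assume "j \<in> {1..N}"
    then have j: "1 \<le> j" "int j < C" using NC by auto
    then have ju: "real j < u" by (simp add: C_def less_ceiling_iff)
    have "real j \<le> real n"
    proof -
      have "real_of_int (int j) \<le> real_of_int C - 1" using j(2) by linarith
      then show ?thesis using Cu u0 by simp
    qed
    moreover have "2 * real j - 1 < t * (2 * real n)" using ju by (simp add: u_def algebra_simps)
    ultimately show "j \<in> {j \<in> {1..n}. mp_nodes n j < t}"
      using j n by (auto simp: mp_nodes_def divide_less_eq)
  qed
  have "(\<Sum>j = 1..n. K (mp_nodes n j) t) = (\<Sum>j = 1..n. t - of_bool (mp_nodes n j < t))"
    by (rule sum.cong) (auto simp: K_def)
  also have "\<dots> = real n * t - (\<Sum>j = 1..n. of_bool (mp_nodes n j < t))"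
    unfolding sum_subtractf by simp
  also have "(\<Sum>j = 1..n. of_bool (mp_nodes n j < t)) = real (card {j \<in> {1..n}. mp_nodes n j < t})"
    by (simp add: sum.If_cases Int_def)
  also have "\<dots> = real N" unfolding set_eq by simp
  finally have eq: "(\<Sum>j = 1..n. K (mp_nodes n j) t) = real n * t - of_int (int N)" by simp
  have "\<bar>real n * t - of_int (int N)\<bar> \<le> 1/2"
    using Cu NC unfolding u_def abs_le_iff by linarith
  from round_near[OF this] have "\<bar>(\<Sum>j = 1..n. K (mp_nodes n j) t)\<bar> = \<bar>real n * t - of_int (round (real n * t))\<bar>"
    unfolding eq by simp
  then show ?thesis using n by (simp add: Dk_def dg_def abs_mult)
qed


lemma pow_int_up:
  fixes a b r :: real assumes r: "r > 0" and ab: "a \<le> b"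
  shows "((\<lambda>t. (t - a) powr r) has_integral ((b - a) powr (r + 1) / (r + 1))) {a..b}"
proof -
  have "((\<lambda>t. (t - a) powr r) has_integral ((\<lambda>t. (t - a) powr (r + 1) / (r + 1)) b - (\<lambda>t. (t - a) powr (r + 1) / (r + 1)) a)) {a..b}"
  proof (rule fundamental_theorem_of_calculus_interior_strong[where S="{}"])
    show "continuous_on {a..b} (\<lambda>t. (t - a) powr (r + 1) / (r + 1))"
      using r by (intro continuous_intros continuous_on_powr') auto
    fix x assume x: "x \<in> {a<..<b} - {}"
    have "((\<lambda>t. (t - a) powr (r + 1)) has_real_derivative ((r + 1) * (x - a) powr (r + 1 - of_nat 1) * 1)) (at x)"
      by (rule DERIV_fun_powr) (use x in \<open>auto intro!: derivative_eq_intros\<close>)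
    then have "((\<lambda>t. (t - a) powr (r + 1) / (r + 1)) has_real_derivative (x - a) powr r) (at x)"
      using r x by (auto intro!: derivative_eq_intros)
    then show "((\<lambda>t. (t - a) powr (r + 1) / (r + 1)) has_vector_derivative (x - a) powr r) (at x)"
      by (simp add: has_real_derivative_iff_has_vector_derivative)
  qed (use ab in auto)
  then show ?thesis by simp
qed

lemma pow_int_down:
  fixes a b r :: real assumes r: "r > 0" and ab: "a \<le> b"
  shows "((\<lambda>t. (b - t) powr r) has_integral ((b - a) powr (r + 1) / (r + 1))) {a..b}"
proof -
  have "((\<lambda>t. (b - t) powr r) has_integral ((\<lambda>t. - ((b - t) powr (r + 1) / (r + 1))) b - (\<lambda>t. - ((b - t) powr (r + 1) / (r + 1))) a)) {a..b}"
  proof (rule fundamental_theorem_of_calculus_interior_strong[where S="{}"])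
    show "continuous_on {a..b} (\<lambda>t. - ((b - t) powr (r + 1) / (r + 1)))"
      using r by (intro continuous_intros continuous_on_powr') auto
    fix x assume x: "x \<in> {a<..<b} - {}"
    have "((\<lambda>t. (b - t) powr (r + 1)) has_real_derivative ((r + 1) * (b - x) powr (r + 1 - of_nat 1) * (-1))) (at x)"
      by (rule DERIV_fun_powr) (use x in \<open>auto intro!: derivative_eq_intros\<close>)
    then have "((\<lambda>t. - ((b - t) powr (r + 1) / (r + 1))) has_real_derivative (b - x) powr r) (at x)"
      using r x by (auto intro!: derivative_eq_intros)
    then show "((\<lambda>t. - ((b - t) powr (r + 1) / (r + 1))) has_vector_derivative (b - x) powr r) (at x)"
      by (simp add: has_real_derivative_iff_has_vector_derivative)
  qed (use ab in auto)
  then show ?thesis by simp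
qed


lemma dg_up: assumes k: "k \<ge> 1" and t: "real i / real k \<le> t" "t \<le> real i / real k + 1 / (2 * real k)"
  shows "dg k t = t - real i / real k"
proof -
  have kp: "real k > 0" using k by simp
  have z: "real i \<le> real k * t" "real k * t \<le> real i + 1/2"
    using t kp by (auto simp: field_simps)
  have "\<bar>real k * t - of_int (int i)\<bar> \<le> 1/2" using z by simp
  from round_near[OF this] have "\<bar>real k * t - of_int (round (real k * t))\<bar> = real k * t - real i"
    using z by simp
  then show ?thesis using kp by (simp add: dg_def field_simps)
qed

lemma dg_down: assumes k: "k \<ge> 1" and t: "real i / real k + 1 / (2 * real k) \<le> t" "t \<le> (real i + 1) / real k"
  shows "dg k t = (real i + 1) / real k - t"
proof -
  have kp: "real k > 0" using k by simp
  have z: "real i + 1/2 \<le> real k * t" "real k * t \<le> real i + 1"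
    using t kp by (auto simp: field_simps)
  have "\<bar>real k * t - of_int (int i + 1)\<bar> \<le> 1/2" using z by (simp add: abs_le_iff)
  from round_near[OF this] have "\<bar>real k * t - of_int (round (real k * t))\<bar> = real i + 1 - real k * t"
    using z by simp
  then show ?thesis using kp by (simp add: dg_def field_simps)
qed

lemma dg_piece:
  assumes k: "k \<ge> 1" and r: "r > 0"
  shows "((\<lambda>t. dg k t powr r) has_integral (2 * (1 / (2 * real k)) powr (r + 1) / (r + 1)))
           {real i / real k..(real i + 1) / real k}"
proof -
  have kp: "real k > 0" using k by simp
  define a where "a = real i / real k"
  define m where "m = real i / real k + 1 / (2 * real k)"
  define b where "b = (real i + 1) / real k"
  have am: "m - a = 1 / (2 * real k)" and mb: "b - m = 1 / (2 * real k)"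
    using kp by (auto simp: a_def m_def b_def field_simps)
  have "1 / (2 * real k) > 0" using kp by simp
  then have am': "a \<le> m" "m \<le> b" using am mb by linarith+
  have I1: "((\<lambda>t. dg k t powr r) has_integral ((1 / (2 * real k)) powr (r + 1) / (r + 1))) {a..m}"
  proof (rule has_integral_eq[OF _ pow_int_up[OF r am'(1), unfolded am]])
    fix t assume "t \<in> {a..m}"
    then show "(t - a) powr r = dg k t powr r" using dg_up[OF k, of i t] by (simp add: a_def m_def)
  qed
  have I2: "((\<lambda>t. dg k t powr r) has_integral ((1 / (2 * real k)) powr (r + 1) / (r + 1))) {m..b}"
  proof (rule has_integral_eq[OF _ pow_int_down[OF r am'(2), unfolded mb]])
    fix t assume "t \<in> {m..b}"
    then show "(b - t) powr r = dg k t powr r" using dg_down[OF k, of i t] by (simp add: b_def m_def)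
  qed
  from has_integral_combine[OF am' I1 I2] show ?thesis by (simp add: a_def b_def)
qed

lemma dg_has_integral:
  assumes k: "k \<ge> 1" and r: "r > 0"
  shows "((\<lambda>t. dg k t powr r) has_integral ((1 / (2 * real k)) powr r / (r + 1))) {0..1}"
proof -
  have kp: "real k > 0" using k by simp
  define c where "c = 2 * (1 / (2 * real k)) powr (r + 1) / (r + 1)"
  have ind: "((\<lambda>t. dg k t powr r) has_integral (real m * c)) {0..real m / real k}" for m
  proof (induction m)
    case 0 then show ?case by (simp add: has_integral_refl(2))
  next
    case (Suc m)
    have "((\<lambda>t. dg k t powr r) has_integral (real m * c + c)) {0..(real m + 1) / real k}"
      by (rule has_integral_combine[OF _ _ Suc dg_piece[OF k r, of m, folded c_def]])
         (use kp in \<open>auto simp: field_simps\<close>)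
    then show ?case by (simp add: algebra_simps)
  qed
  have "real k * c = (1 / (2 * real k)) powr r / (r + 1)"
  proof -
    have "(1 / (2 * real k)) powr (r + 1) = (1 / (2 * real k)) powr r * (1 / (2 * real k))"
      using kp by (simp add: powr_add)
    then show ?thesis using kp by (simp add: c_def field_simps)
  qed
  with ind[of k] show ?thesis using kp by simp
qed


lemma dg_meas[measurable]: "dg k \<in> borel_measurable M01"
proof -
  have "(\<lambda>t. real_of_int \<lfloor>real k * t + 1/2\<rfloor>) \<in> borel_measurable M01"
    by (rule measurable_compose[OF _ borel_measurable_real_floor]) measurable
  then show ?thesis unfolding dg_def round_def by measurable
qed

lemma dg_nonneg: "dg k t \<ge> 0" by (simp add: dg_def)

lemma dg_le: "dg k t \<le> 1 / (2 * real k)"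
proof -
  have "\<bar>real k * t - of_int (round (real k * t))\<bar> \<le> 1/2"
    unfolding abs_le_iff using of_int_round_le[of "real k * t"] of_int_round_ge[of "real k * t"] by linarith
  then show ?thesis by (cases "k = 0") (auto simp: dg_def field_simps)
qed

lemma dg_leb:
  assumes k: "k \<ge> 1" and r: "r > 0"
  shows "integrable M01 (\<lambda>t. dg k t powr r)"
    "integral\<^sup>L M01 (\<lambda>t. dg k t powr r) = (1 / (2 * real k)) powr r / (r + 1)"
proof -
  note I = dg_has_integral[OF k r]
  have "(\<lambda>t. dg k t powr r) absolutely_integrable_on {0..1}"
    by (rule nonnegative_absolutely_integrable_1) (use I in \<open>auto simp: has_integral_integrable\<close>)
  then have "integrable M01 (\<lambda>t. \<bar>dg k t powr r\<bar>)"
    by (subst (asm) absolutely_integrable_measurable_real) auto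
  then show int: "integrable M01 (\<lambda>t. dg k t powr r)" by simp
  show "integral\<^sup>L M01 (\<lambda>t. dg k t powr r) = (1 / (2 * real k)) powr r / (r + 1)"
    using lebesgue_integral_eq_integral[OF int] I by (simp add: integral_unique)
qed

lemma int_const_bound:
  fixes f :: "real \<Rightarrow> real" and B :: real
  assumes "f \<in> borel_measurable M01" "\<And>t. t \<in> {0..1} \<Longrightarrow> \<bar>f t\<bar> \<le> B"
  shows "integrable M01 f"
  by (rule M01.integrable_const_bound[where B=B]) (use assms in auto)

lemma sgn_h:
  fixes x :: "nat \<Rightarrow> real"
  assumes k: "k \<ge> 1" and r0: "r0 > 0" and s: "s \<ge> 0"
  defines "h \<equiv> (\<lambda>t. s * sgn (Dk k x t) * dg k t powr r0)"
  shows "h \<in> borel_measurable M01" "integrable M01 h"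
    "\<And>t. \<bar>h t\<bar> = s * dg k t powr r0"
    "integral\<^sup>L M01 (\<lambda>t. h t * Dk k x t) \<ge> s * ((1 / (2 * real k)) powr (r0 + 1) / (r0 + 2))"
proof -
  show hm: "h \<in> borel_measurable M01" unfolding h_def by measurable
  show habs: "\<bar>h t\<bar> = s * dg k t powr r0" for t
  proof (cases "Dk k x t = 0")
    case True
    then have "dg k t = 0" using Dk_ge[OF k, of t x] dg_nonneg[of k t] by simp
    then show ?thesis by (simp add: h_def)
  next
    case False
    then show ?thesis using s by (simp add: h_def abs_mult)
  qed
  have bnd: "\<bar>dg k t powr r0\<bar> \<le> (1 / (2 * real k)) powr r0" for t
    using dg_le[of k t] dg_nonneg[of k t] r0 by (simp add: powr_mono2)
  show "integrable M01 h"
    by (rule int_const_bound[OF hm, where B="s * (1 / (2 * real k)) powr r0"])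
       (use bnd s in \<open>auto simp: habs intro: mult_left_mono\<close>)
  have hD: "h t * Dk k x t = s * (\<bar>Dk k x t\<bar> * dg k t powr r0)" for t
    by (simp add: h_def abs_sgn[symmetric] algebra_simps)
  have ge: "s * dg k t powr (r0 + 1) \<le> h t * Dk k x t" for t
  proof -
    have "dg k t powr (r0 + 1) = dg k t * dg k t powr r0"
      using dg_nonneg[of k t] by (cases "dg k t = 0") (auto simp: powr_add)
    also have "\<dots> \<le> \<bar>Dk k x t\<bar> * dg k t powr r0"
      by (rule mult_right_mono[OF Dk_ge[OF k]]) simp
    finally show ?thesis unfolding hD using s by (simp add: mult_left_mono)
  qed
  have "integral\<^sup>L M01 (\<lambda>t. s * dg k t powr (r0 + 1)) \<le> integral\<^sup>L M01 (\<lambda>t. h t * Dk k x t)"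
  proof (rule integral_mono)
    show "integrable M01 (\<lambda>t. s * dg k t powr (r0 + 1))" using dg_leb[OF k, of "r0+1"] r0 by simp
    show "integrable M01 (\<lambda>t. h t * Dk k x t)"
    proof (rule int_const_bound[where B="s * (1 / (2 * real k)) powr r0"])
      show "(\<lambda>t. h t * Dk k x t) \<in> borel_measurable M01" using hm by measurable
      fix t :: real assume t: "t \<in> {0..1}"
      have h1: "\<bar>h t\<bar> \<le> s * (1 / (2 * real k)) powr r0"
        unfolding habs using bnd[of t] s by (simp add: mult_left_mono)
      have "\<bar>h t * Dk k x t\<bar> = \<bar>h t\<bar> * \<bar>Dk k x t\<bar>" by (simp add: abs_mult)
      also have "\<dots> \<le> s * (1 / (2 * real k)) powr r0 * 1"
        by (rule mult_mono[OF h1 Dk_bound[OF t]]) (use s in auto)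
      finally show "\<bar>h t * Dk k x t\<bar> \<le> s * (1 / (2 * real k)) powr r0" by simp
    qed
  qed (use ge in auto)
  then show "integral\<^sup>L M01 (\<lambda>t. h t * Dk k x t) \<ge> s * ((1 / (2 * real k)) powr (r0 + 1) / (r0 + 2))"
    using dg_leb[OF k, of "r0+1"] r0 by (simp add: add.assoc)
qed


lemma wterm_zero[simp]: "wterm r \<gamma> 0 = 0" by (simp add: wterm_def)

lemma wterm_0_iff: "wterm r 0 X \<le> 1 \<longleftrightarrow> X = 0" by (simp add: wterm_def top_unique)

lemma wterm_pos_iff:
  assumes g: "\<gamma> > 0" shows "wterm r \<gamma> X \<le> 1 \<longleftrightarrow> X \<le> ennreal (\<gamma> powr r)"
proof -
  have cc: "ennreal (\<gamma> powr r) * ennreal (\<gamma> powr (-r)) = 1"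
    using g by (simp add: ennreal_mult'[symmetric] powr_add[symmetric])
  have w: "wterm r \<gamma> X = ennreal (\<gamma> powr (-r)) * X" using g by (simp add: wterm_def)
  show ?thesis unfolding w
  proof
    assume a: "ennreal (\<gamma> powr (-r)) * X \<le> 1"
    have "X = ennreal (\<gamma> powr r) * (ennreal (\<gamma> powr (-r)) * X)"
      by (simp add: mult.assoc[symmetric] cc)
    also have "\<dots> \<le> ennreal (\<gamma> powr r) * 1" by (rule mult_left_mono[OF a]) simp
    finally show "X \<le> ennreal (\<gamma> powr r)" by simp
  next
    assume a: "X \<le> ennreal (\<gamma> powr r)"
    have "ennreal (\<gamma> powr (-r)) * X \<le> ennreal (\<gamma> powr (-r)) * ennreal (\<gamma> powr r)"
      by (rule mult_left_mono[OF a]) simp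
    also have "\<dots> = 1" using cc by (simp add: mult.commute)
    finally show "ennreal (\<gamma> powr (-r)) * X \<le> 1" .
  qed
qed

definition bcond :: "ereal \<Rightarrow> real \<Rightarrow> (real \<Rightarrow> real) \<Rightarrow> bool" where
  "bcond p g1 h = (if p = \<infinity> then (AE t in M01. \<bar>h t\<bar> \<le> g1)
     else wterm (real_of_ereal p) g1 (\<integral>\<^sup>+ t. ennreal (\<bar>h t\<bar> powr real_of_ereal p) \<partial>M01) \<le> 1)"

lemma ball_E:
  assumes "f \<in> unit_ball p g0 g1"
  obtains c h where "h \<in> borel_measurable M01" "f = (\<lambda>x. c + f1_of h x)" "bcond p g1 h"
proof -
  from assms obtain c h where h: "h \<in> borel_measurable M01" "f = (\<lambda>x. c + f1_of h x)"
    and cond: "(if p = \<infinity> then \<bar>c\<bar> \<le> g0 \<and> (AE t in lebesgue_on {0..1}. \<bar>h t\<bar> \<le> g1)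
       else wterm (real_of_ereal p) g0 (ennreal (\<bar>c\<bar> powr real_of_ereal p))
          + wterm (real_of_ereal p) g1
              (\<integral>\<^sup>+ t. ennreal (\<bar>h t\<bar> powr real_of_ereal p) \<partial>lebesgue_on {0..1}) \<le> 1)"
    unfolding unit_ball_def by blast
  have "bcond p g1 h"
  proof (cases "p = \<infinity>")
    case True then show ?thesis using cond by (simp add: bcond_def)
  next
    case False
    then show ?thesis using cond unfolding bcond_def
      by (auto intro: order_trans[OF add_increasing])
  qed
  then show ?thesis using that h by blast
qed

lemma ball_I:
  assumes "h \<in> borel_measurable M01" "bcond p g1 h" "g0 \<ge> 0"
  shows "(\<lambda>x. 0 + f1_of h x) \<in> unit_ball p g0 g1"
  unfolding unit_ball_def mem_Collect_eq
  by (rule exI[of _ 0], rule exI[of _ h]) (use assms in \<open>auto simp: bcond_def\<close>)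

lemma err_ge:
  assumes hm: "h \<in> borel_measurable M01" and b: "bcond p g1 h" and g0: "g0 \<ge> 0"
    and hi: "integrable M01 h" and k: "k \<ge> 1"
  shows "ereal \<bar>integral\<^sup>L M01 (\<lambda>t. h t * Dk k x t)\<bar> \<le> qmc_error p g0 g1 k x"
proof -
  have "ereal \<bar>integral\<^sup>L M01 (\<lambda>y. 0 + f1_of h y) - QMC k x (\<lambda>y. 0 + f1_of h y)\<bar> \<le> qmc_error p g0 g1 k x"
    unfolding qmc_error_def by (rule SUP_upper[OF ball_I[OF hm b g0]])
  then show ?thesis using err_formula[OF hm hi k, of 0 x] by simp
qed

lemma err_le:
  assumes k: "k \<ge> 1"
    and H: "\<And>h. h \<in> borel_measurable M01 \<Longrightarrow> bcond p g1 h \<Longrightarrow>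
              integrable M01 h \<and> \<bar>integral\<^sup>L M01 (\<lambda>t. h t * Dk k x t)\<bar> \<le> E"
  shows "qmc_error p g0 g1 k x \<le> ereal E"
  unfolding qmc_error_def
proof (rule SUP_least)
  fix f assume "f \<in> unit_ball p g0 g1"
  then obtain c h where hm: "h \<in> borel_measurable M01" and f: "f = (\<lambda>x. c + f1_of h x)" and b: "bcond p g1 h"
    by (rule ball_E)
  from H[OF hm b] have hi: "integrable M01 h" and le: "\<bar>integral\<^sup>L M01 (\<lambda>t. h t * Dk k x t)\<bar> \<le> E" by auto
  show "ereal \<bar>integral\<^sup>L M01 f - QMC k x f\<bar> \<le> ereal E"
    using err_formula[OF hm hi k, of c x] le unfolding f by simp
qed


lemma fin_cond:
  assumes r: "r \<ge> 1" and hm[measurable]: "h \<in> borel_measurable M01" and g1: "g1 \<ge> 0"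
    and w: "wterm r g1 (\<integral>\<^sup>+ t. ennreal (\<bar>h t\<bar> powr r) \<partial>M01) \<le> 1"
  shows "integrable M01 h" "integrable M01 (\<lambda>t. \<bar>h t\<bar> powr r)"
    "integral\<^sup>L M01 (\<lambda>t. \<bar>h t\<bar> powr r) \<le> g1 powr r"
    "g1 = 0 \<Longrightarrow> AE t in M01. h t = 0"
proof -
  have hp: "integrable M01 (\<lambda>t. \<bar>h t\<bar> powr r) \<and> integral\<^sup>L M01 (\<lambda>t. \<bar>h t\<bar> powr r) \<le> g1 powr r
      \<and> (g1 = 0 \<longrightarrow> (AE t in M01. h t = 0))"
  proof (cases "g1 = 0")
    case True
    with w have "(\<integral>\<^sup>+ t. ennreal (\<bar>h t\<bar> powr r) \<partial>M01) = 0" by (simp add: wterm_0_iff)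
    then have "AE t in M01. ennreal (\<bar>h t\<bar> powr r) = 0" by (subst (asm) nn_integral_0_iff_AE) auto
    then have ae: "AE t in M01. h t = 0" by eventually_elim (use r in auto)
    have ae2: "AE t in M01. \<bar>h t\<bar> powr r = 0" using ae by eventually_elim simp
    have "integrable M01 (\<lambda>t. \<bar>h t\<bar> powr r)"
      by (subst integrable_cong_AE[where g="\<lambda>_. 0"]) (use ae2 in auto)
    moreover have "integral\<^sup>L M01 (\<lambda>t. \<bar>h t\<bar> powr r) = 0"
      by (subst integral_cong_AE[where g="\<lambda>_. 0"]) (use ae2 in auto)
    ultimately show ?thesis using True ae by simp
  next
    case False
    then have gp: "g1 > 0" using g1 by simp
    with w have le: "(\<integral>\<^sup>+ t. ennreal (\<bar>h t\<bar> powr r) \<partial>M01) \<le> ennreal (g1 powr r)"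
      by (simp add: wterm_pos_iff)
    have int: "integrable M01 (\<lambda>t. \<bar>h t\<bar> powr r)"
      by (rule integrableI_nonneg) (use le in \<open>auto simp: le_less_trans\<close>)
    have "ennreal (integral\<^sup>L M01 (\<lambda>t. \<bar>h t\<bar> powr r)) \<le> ennreal (g1 powr r)"
      using le nn_integral_eq_integral[OF int] by simp
    then have "integral\<^sup>L M01 (\<lambda>t. \<bar>h t\<bar> powr r) \<le> g1 powr r"
      by (subst (asm) ennreal_le_iff) auto
    then show ?thesis using int False by simp
  qed
  then show "integrable M01 (\<lambda>t. \<bar>h t\<bar> powr r)" "integral\<^sup>L M01 (\<lambda>t. \<bar>h t\<bar> powr r) \<le> g1 powr r"
    "g1 = 0 \<Longrightarrow> AE t in M01. h t = 0" by auto
  show "integrable M01 h"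
  proof (rule Bochner_Integration.integrable_bound[where f="\<lambda>t. 1 + \<bar>h t\<bar> powr r"])
    show "integrable M01 (\<lambda>t. 1 + \<bar>h t\<bar> powr r)" using hp by (auto simp: M01.emeasure_real less_top[symmetric])
    show "AE t in M01. norm (h t) \<le> norm (1 + \<bar>h t\<bar> powr r)"
    proof (rule AE_I2)
      fix t
      show "norm (h t) \<le> norm (1 + \<bar>h t\<bar> powr r)"
      proof (cases "\<bar>h t\<bar> \<le> 1")
        case True
        have "0 \<le> \<bar>h t\<bar> powr r" by simp
        then have "\<bar>h t\<bar> \<le> 1 + \<bar>h t\<bar> powr r" using True by linarith
        then show ?thesis by simp
      next
        case False
        then have "\<bar>h t\<bar> powr 1 \<le> \<bar>h t\<bar> powr r" using r by (intro powr_mono) auto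
        then show ?thesis by simp
      qed
    qed
  qed simp
qed


lemma dg_int1: assumes k: "k \<ge> 1"
  shows "integrable M01 (dg k)" "integral\<^sup>L M01 (dg k) = 1 / (4 * real k)"
proof -
  have eq: "(\<lambda>t. dg k t powr 1) = dg k" by (rule ext) (simp add: dg_nonneg)
  have "integrable M01 (\<lambda>t. dg k t powr 1)" by (rule dg_leb(1)[OF k]) simp
  then show "integrable M01 (dg k)" by (simp only: eq)
  have "integral\<^sup>L M01 (\<lambda>t. dg k t powr 1) = (1 / (2 * real k)) powr 1 / (1 + 1)" by (rule dg_leb(2)[OF k]) simp
  then show "integral\<^sup>L M01 (dg k) = 1 / (4 * real k)" by (simp only: eq) simp
qed

lemma UB_inf:
  assumes n: "n \<ge> 1" and g1: "g1 \<ge> 0"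
  shows "qmc_error \<infinity> g0 g1 n (mp_nodes n) \<le> ereal (g1 / (4 * real n))"
proof (rule err_le[OF n])
  fix h assume hm[measurable]: "h \<in> borel_measurable M01" and b: "bcond \<infinity> g1 h"
  then have ae: "AE t in M01. \<bar>h t\<bar> \<le> g1" by (simp add: bcond_def)
  have hi: "integrable M01 h" by (rule M01.integrable_const_bound[where B=g1]) (use ae in auto)
  have i1: "integrable M01 (\<lambda>t. \<bar>h t * Dk n (mp_nodes n) t\<bar>)"
  proof (rule M01.integrable_const_bound[where B=g1])
    show "AE t in M01. norm \<bar>h t * Dk n (mp_nodes n) t\<bar> \<le> g1"
      using ae AE_space
    proof eventually_elim
      case (elim t)
      have "\<bar>h t\<bar> * \<bar>Dk n (mp_nodes n) t\<bar> \<le> g1 * 1"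
        by (rule mult_mono) (use elim Dk_bound g1 in auto)
      then show ?case by (simp add: abs_mult)
    qed
  qed simp
  have "\<bar>integral\<^sup>L M01 (\<lambda>t. h t * Dk n (mp_nodes n) t)\<bar> \<le> integral\<^sup>L M01 (\<lambda>t. \<bar>h t * Dk n (mp_nodes n) t\<bar>)"
    by (rule integral_abs_bound)
  also have "\<dots> \<le> integral\<^sup>L M01 (\<lambda>t. g1 * dg n t)"
  proof (rule integral_mono_AE[OF i1])
    show "integrable M01 (\<lambda>t. g1 * dg n t)" using dg_int1[OF n] by simp
    show "AE t in M01. \<bar>h t * Dk n (mp_nodes n) t\<bar> \<le> g1 * dg n t"
      using ae AE_space
    proof eventually_elim
      case (elim t)
      then have t: "t \<in> {0..1}" by simp
      show ?case unfolding abs_mult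
        by (rule mult_mono[OF elim(1) Dmp_le[OF n t]]) (use g1 in auto)
    qed
  qed
  also have "\<dots> = g1 / (4 * real n)" using dg_int1[OF n] by simp
  finally show "integrable M01 h \<and> \<bar>integral\<^sup>L M01 (\<lambda>t. h t * Dk n (mp_nodes n) t)\<bar> \<le> g1 / (4 * real n)"
    using hi by simp
qed


lemma LB_inf:
  assumes k: "k \<ge> 1" and g0: "g0 \<ge> 0" and g1: "g1 \<ge> 0"
  shows "ereal (g1 / (4 * real k)) \<le> qmc_error \<infinity> g0 g1 k x"
proof -
  define h where "h = (\<lambda>t. g1 * sgn (Dk k x t))"
  have hm[measurable]: "h \<in> borel_measurable M01" unfolding h_def by measurable
  have hb: "\<bar>h t\<bar> \<le> g1" for t using g1 by (auto simp: h_def abs_mult abs_sgn_eq)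
  have b: "bcond \<infinity> g1 h" using hb by (simp add: bcond_def)
  have hi: "integrable M01 h" by (rule int_const_bound[OF hm hb])
  have hD: "h t * Dk k x t = g1 * \<bar>Dk k x t\<bar>" for t
    by (simp add: h_def abs_sgn[symmetric] algebra_simps)
  have "g1 / (4 * real k) = integral\<^sup>L M01 (\<lambda>t. g1 * dg k t)" using dg_int1[OF k] by simp
  also have "\<dots> \<le> integral\<^sup>L M01 (\<lambda>t. h t * Dk k x t)"
  proof (rule integral_mono)
    show "integrable M01 (\<lambda>t. g1 * dg k t)" using dg_int1[OF k] by simp
    show "integrable M01 (\<lambda>t. h t * Dk k x t)"
    proof (rule int_const_bound[where B=g1])
      show "(\<lambda>t. h t * Dk k x t) \<in> borel_measurable M01" by measurable
      fix t :: real assume t: "t \<in> {0..1}"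
      have "\<bar>h t\<bar> * \<bar>Dk k x t\<bar> \<le> g1 * 1" by (rule mult_mono) (use hb Dk_bound[OF t] g1 in auto)
      then show "\<bar>h t * Dk k x t\<bar> \<le> g1" by (simp add: abs_mult)
    qed
    fix t show "g1 * dg k t \<le> h t * Dk k x t" unfolding hD
      by (rule mult_left_mono[OF Dk_ge[OF k] g1])
  qed
  also have "\<dots> \<le> \<bar>integral\<^sup>L M01 (\<lambda>t. h t * Dk k x t)\<bar>" by simp
  finally have "ereal (g1 / (4 * real k)) \<le> ereal \<bar>integral\<^sup>L M01 (\<lambda>t. h t * Dk k x t)\<bar>" by simp
  also have "\<dots> \<le> qmc_error \<infinity> g0 g1 k x" by (rule err_ge[OF hm b g0 hi k])
  finally show ?thesis .
qed


lemma UB_one: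
  assumes n: "n \<ge> 1" and g1: "g1 \<ge> 0"
  shows "qmc_error 1 g0 g1 n (mp_nodes n) \<le> ereal (g1 / (2 * real n))"
proof (rule err_le[OF n])
  fix h assume hm[measurable]: "h \<in> borel_measurable M01" and b: "bcond 1 g1 h"
  then have w: "wterm 1 g1 (\<integral>\<^sup>+ t. ennreal (\<bar>h t\<bar> powr 1) \<partial>M01) \<le> 1"
    by (simp add: bcond_def)
  note fc = fin_cond[OF _ hm g1 w]
  have hi: "integrable M01 h" using fc by simp
  have eq1: "(\<lambda>t. \<bar>h t\<bar> powr 1) = (\<lambda>t. \<bar>h t\<bar>)" by (rule ext) simp
  have ai: "integrable M01 (\<lambda>t. \<bar>h t\<bar>)" and al: "integral\<^sup>L M01 (\<lambda>t. \<bar>h t\<bar>) \<le> g1"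
    using fc(2,3) g1 unfolding eq1 by auto
  have "\<bar>integral\<^sup>L M01 (\<lambda>t. h t * Dk n (mp_nodes n) t)\<bar> \<le> integral\<^sup>L M01 (\<lambda>t. \<bar>h t\<bar> * (1 / (2 * real n)))"
  proof (rule integral_abs_bound_integral)
    show "integrable M01 (\<lambda>t. \<bar>h t\<bar> * (1 / (2 * real n)))" using ai by simp
    show "integrable M01 (\<lambda>t. h t * Dk n (mp_nodes n) t)"
      by (rule Bochner_Integration.integrable_bound[OF ai]) (auto simp: abs_mult intro!: mult_left_le Dk_bound)
    fix t assume "t \<in> space M01"
    then have t: "t \<in> {0..1}" by simp
    have "\<bar>Dk n (mp_nodes n) t\<bar> \<le> 1 / (2 * real n)" using Dmp_le[OF n t] dg_le[of n t] by linarith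
    then have "\<bar>h t\<bar> * \<bar>Dk n (mp_nodes n) t\<bar> \<le> \<bar>h t\<bar> * (1 / (2 * real n))"
      by (rule mult_left_mono) simp
    then show "\<bar>h t * Dk n (mp_nodes n) t\<bar> \<le> \<bar>h t\<bar> * (1 / (2 * real n))"
      by (simp add: abs_mult)
  qed
  also have "\<dots> = integral\<^sup>L M01 (\<lambda>t. \<bar>h t\<bar>) / (2 * real n)" by simp
  also have "\<dots> \<le> g1 / (2 * real n)" using al n by (simp add: divide_right_mono)
  finally show "integrable M01 h \<and> \<bar>integral\<^sup>L M01 (\<lambda>t. h t * Dk n (mp_nodes n) t)\<bar> \<le> g1 / (2 * real n)"
    using hi by simp
qed


lemma LB_zero:
  assumes k: "k \<ge> 1" and g0: "g0 \<ge> 0" and g1: "g1 \<ge> 0"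
  shows "0 \<le> qmc_error p g0 g1 k x"
proof -
  have b: "bcond p g1 (\<lambda>_. 0)" using g1 by (simp add: bcond_def)
  have "ereal \<bar>integral\<^sup>L M01 (\<lambda>t. (\<lambda>_. 0) t * Dk k x t)\<bar> \<le> qmc_error p g0 g1 k x"
    by (rule err_ge[OF _ b g0 _ k]) auto
  then show ?thesis by (simp add: zero_ereal_def)
qed

lemma lim_lb:
  fixes a :: real and X :: ereal
  assumes a: "a \<ge> 0" and H: "\<And>m::nat. m \<ge> 1 \<Longrightarrow> ereal (a * ((real m + 1) / (real m + 2))) \<le> X"
  shows "ereal a \<le> X"
proof (cases X)
  case (real x)
  have lim: "(\<lambda>m::nat. a * ((real m + 1) / (real m + 2))) \<longlonglongrightarrow> a"
    by real_asymp
  have "a \<le> x"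
  proof (rule LIMSEQ_le_const2[OF lim])
    show "\<exists>N. \<forall>m\<ge>N. a * ((real m + 1) / (real m + 2)) \<le> x"
      using H real by (intro exI[of _ 1]) auto
  qed
  then show ?thesis using real by simp
next
  case MInf
  with H[of 1] show ?thesis by simp
qed simp

lemma LB_one:
  assumes k: "k \<ge> 1" and g0: "g0 \<ge> 0" and g1: "g1 \<ge> 0"
  shows "ereal (g1 / (2 * real k)) \<le> qmc_error 1 g0 g1 k x"
proof (cases "g1 = 0")
  case True then show ?thesis using LB_zero[OF k g0 g1, of 1 x] by (simp add: zero_ereal_def)
next
  case False
  then have gp: "g1 > 0" using g1 by simp
  have kp: "real k > 0" using k by simp
  define c where "c = 1 / (2 * real k)"
  have cp: "c > 0" using kp by (simp add: c_def)
  show ?thesis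
  proof (rule lim_lb)
    show "g1 / (2 * real k) \<ge> 0" using g1 by simp
    fix m :: nat assume m: "m \<ge> 1"
    define I where "I = c powr real m / (real m + 1)"
    have Ip: "I > 0" using cp by (simp add: I_def)
    define s where "s = g1 / I"
    have s: "s \<ge> 0" using g1 Ip by (simp add: s_def)
    have r0: "real m > 0" using m by simp
    define h where "h = (\<lambda>t. s * sgn (Dk k x t) * dg k t powr real m)"
    note SH0 = sgn_h[OF k r0 s, of x]
    have SH: "h \<in> borel_measurable M01" "integrable M01 h" "\<And>t. \<bar>h t\<bar> = s * dg k t powr real m"
      "integral\<^sup>L M01 (\<lambda>t. h t * Dk k x t) \<ge> s * ((1 / (2 * real k)) powr (real m + 1) / (real m + 2))"
      unfolding h_def using SH0 by auto
    have habs: "\<bar>h t\<bar> powr 1 = s * dg k t powr real m" for t using SH(3)[of t] by simp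
    have int_sd: "integrable M01 (\<lambda>t. s * dg k t powr real m)" using dg_leb(1)[OF k r0] by simp
    have "(\<integral>\<^sup>+ t. ennreal (\<bar>h t\<bar> powr 1) \<partial>M01) = ennreal (integral\<^sup>L M01 (\<lambda>t. s * dg k t powr real m))"
      unfolding habs by (rule nn_integral_eq_integral[OF int_sd]) (use s in auto)
    also have "integral\<^sup>L M01 (\<lambda>t. s * dg k t powr real m) = g1"
      using dg_leb(2)[OF k r0] Ip k by (simp add: s_def I_def c_def)
    finally have "wterm 1 g1 (\<integral>\<^sup>+ t. ennreal (\<bar>h t\<bar> powr 1) \<partial>M01) \<le> 1"
      using gp by (simp add: wterm_pos_iff)
    then have b: "bcond 1 g1 h" by (simp add: bcond_def)
    have "g1 / (2 * real k) * ((real m + 1) / (real m + 2)) = s * (c powr (real m + 1) / (real m + 2))"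
    proof -
      have e: "c powr (real m + 1) = c powr real m * c" using cp by (simp add: powr_add)
      have Pp: "c powr real m > 0" using cp by simp
      have key: "\<And>P::real. P > 0 \<Longrightarrow> g1 / (P / (real m + 1)) * (P * c / (real m + 2)) = g1 * c * ((real m + 1) / (real m + 2))"
      proof -
        fix P :: real assume P: "P > 0"
        have "P * real m + P * 2 > 0" using P by (intro add_nonneg_pos) auto
        then show "g1 / (P / (real m + 1)) * (P * c / (real m + 2)) = g1 * c * ((real m + 1) / (real m + 2))"
          using P by (simp add: field_simps)
      qed
      have "s * (c powr (real m + 1) / (real m + 2)) = g1 * c * ((real m + 1) / (real m + 2))"
        unfolding e s_def I_def by (rule key[OF Pp])
      moreover have "g1 / (2 * real k) = g1 * c" by (simp add: c_def)
      ultimately show ?thesis by simp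
    qed
    also have "\<dots> \<le> integral\<^sup>L M01 (\<lambda>t. h t * Dk k x t)" using SH(4) by (simp add: c_def add.commute)
    also have "\<dots> \<le> \<bar>integral\<^sup>L M01 (\<lambda>t. h t * Dk k x t)\<bar>" by simp
    finally have "ereal (g1 / (2 * real k) * ((real m + 1) / (real m + 2))) \<le> ereal \<bar>integral\<^sup>L M01 (\<lambda>t. h t * Dk k x t)\<bar>"
      by simp
    also have "\<dots> \<le> qmc_error 1 g0 g1 k x" by (rule err_ge[OF SH(1) b g0 SH(2) k])
    finally show "ereal (g1 / (2 * real k) * ((real m + 1) / (real m + 2))) \<le> qmc_error 1 g0 g1 k x" .
  qed
qed


lemma conj_facts:
  fixes r :: real assumes r: "r > 1"
  defines "q \<equiv> r / (r - 1)"
  shows "q > 1" "1 / r + 1 / q = 1" "(q - 1) * r = q" "1 - 1 / r = 1 / q" "q - 1 > 0"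
proof -
  have r1: "r - 1 > 0" using r by simp
  show "q > 1" using r1 by (simp add: q_def)
  show "1 / r + 1 / q = 1" using r1 r by (simp add: q_def field_simps)
  show "(q - 1) * r = q" using r1 by (simp add: q_def field_simps)
  show "1 - 1 / r = 1 / q" using r1 r by (simp add: q_def field_simps)
  show "q - 1 > 0" using r1 by (simp add: q_def field_simps)
qed

lemma UB_r:
  assumes n: "n \<ge> 1" and g1: "g1 \<ge> 0" and r: "r > 1"
  defines "q \<equiv> r / (r - 1)"
  shows "qmc_error (ereal r) g0 g1 n (mp_nodes n) \<le> ereal (g1 / (2 * (q + 1) powr (1 / q) * real n))"
proof (rule err_le[OF n])
  note cf = conj_facts[OF r, folded q_def]
  fix h assume hm[measurable]: "h \<in> borel_measurable M01" and b: "bcond (ereal r) g1 h"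
  then have w: "wterm r g1 (\<integral>\<^sup>+ t. ennreal (\<bar>h t\<bar> powr r) \<partial>M01) \<le> 1"
    by (simp add: bcond_def)
  note fc = fin_cond[OF _ hm g1 w]
  have hi: "integrable M01 h" using fc r by simp
  have hri: "integrable M01 (\<lambda>t. \<bar>h t\<bar> powr r)" and hrl: "integral\<^sup>L M01 (\<lambda>t. \<bar>h t\<bar> powr r) \<le> g1 powr r"
    using fc r by auto
  define C where "C = (q + 1) powr (1 / q)"
  have Cp: "C > 0" using cf by (simp add: C_def)
  define N where "N = 1 / (2 * real n * C)"
  have Np: "N > 0" using Cp n by (simp add: N_def)
  have hDi: "integrable M01 (\<lambda>t. h t * Dk n (mp_nodes n) t)"
    by (rule Bochner_Integration.integrable_bound[OF hi]) (auto simp: abs_mult intro!: mult_left_le Dk_bound)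
  have "\<bar>integral\<^sup>L M01 (\<lambda>t. h t * Dk n (mp_nodes n) t)\<bar> \<le> g1 * N"
  proof (cases "g1 = 0")
    case True
    then have ae: "AE t in M01. h t = 0" using fc r by auto
    have "integral\<^sup>L M01 (\<lambda>t. h t * Dk n (mp_nodes n) t) = integral\<^sup>L M01 (\<lambda>t. 0)"
      by (rule integral_cong_AE) (use ae in auto)
    then show ?thesis using True by simp
  next
    case False
    then have gp: "g1 > 0" using g1 by simp
    have dgqi: "integrable M01 (\<lambda>t. dg n t powr q)" and dgq: "integral\<^sup>L M01 (\<lambda>t. dg n t powr q) = (1 / (2 * real n)) powr q / (q + 1)"
      using dg_leb[OF n, of q] cf by auto
    have Nq: "N powr q = (1 / (2 * real n)) powr q / (q + 1)"
    proof -
      have "C powr q = q + 1" using cf by (simp add: C_def powr_powr)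
      moreover have "N powr q = (1 / (2 * real n)) powr q / C powr q"
        using Cp n by (simp add: N_def powr_divide[symmetric] field_simps)
      ultimately show ?thesis by simp
    qed
    have Nqp: "N powr q > 0" using Np by simp
    have pw: "\<bar>h t\<bar> * dg n t \<le> g1 * N * ((\<bar>h t\<bar> powr r / g1 powr r) / r + (dg n t powr q / N powr q) / q)" for t
    proof -
      have "(\<bar>h t\<bar> / g1) * (dg n t / N) \<le> (\<bar>h t\<bar> / g1) powr r / r + (dg n t / N) powr q / q"
        by (rule Youngs_inequality) (use r cf gp Np dg_nonneg in auto)
      also have "\<dots> = (\<bar>h t\<bar> powr r / g1 powr r) / r + (dg n t powr q / N powr q) / q"
        using gp Np dg_nonneg[of n t] by (simp add: powr_divide)
      finally have "(\<bar>h t\<bar> / g1) * (dg n t / N) \<le> (\<bar>h t\<bar> powr r / g1 powr r) / r + (dg n t powr q / N powr q) / q" .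
      then have "g1 * N * ((\<bar>h t\<bar> / g1) * (dg n t / N)) \<le> g1 * N * ((\<bar>h t\<bar> powr r / g1 powr r) / r + (dg n t powr q / N powr q) / q)"
        by (rule mult_left_mono) (use gp Np in auto)
      then show ?thesis using gp Np by simp
    qed
    have "\<bar>integral\<^sup>L M01 (\<lambda>t. h t * Dk n (mp_nodes n) t)\<bar> \<le> integral\<^sup>L M01 (\<lambda>t. \<bar>h t\<bar> * dg n t)"
    proof (rule integral_abs_bound_integral[OF hDi])
      show "integrable M01 (\<lambda>t. \<bar>h t\<bar> * dg n t)"
        by (rule Bochner_Integration.integrable_bound[OF hi]) (use dg_le[of n] dg_nonneg[of n] n in \<open>auto simp: abs_mult intro!: mult_left_le order_trans[OF dg_le] simp: field_simps\<close>)
      fix t assume "t \<in> space M01"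
      then have t: "t \<in> {0..1}" by simp
      show "\<bar>h t * Dk n (mp_nodes n) t\<bar> \<le> \<bar>h t\<bar> * dg n t"
        unfolding abs_mult by (rule mult_left_mono[OF Dmp_le[OF n t]]) simp
    qed
    also have "\<dots> \<le> integral\<^sup>L M01 (\<lambda>t. g1 * N * ((\<bar>h t\<bar> powr r / g1 powr r) / r + (dg n t powr q / N powr q) / q))"
    proof (rule integral_mono)
      show "integrable M01 (\<lambda>t. \<bar>h t\<bar> * dg n t)"
        by (rule Bochner_Integration.integrable_bound[OF hi]) (use dg_le[of n] dg_nonneg[of n] n in \<open>auto simp: abs_mult intro!: mult_left_le order_trans[OF dg_le] simp: field_simps\<close>)
      show "integrable M01 (\<lambda>t. g1 * N * ((\<bar>h t\<bar> powr r / g1 powr r) / r + (dg n t powr q / N powr q) / q))"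
        using hri dgqi by auto
    qed (rule pw)
    also have "\<dots> = g1 * N * ((integral\<^sup>L M01 (\<lambda>t. \<bar>h t\<bar> powr r) / g1 powr r) / r + (integral\<^sup>L M01 (\<lambda>t. dg n t powr q) / N powr q) / q)"
      using hri dgqi by simp
    also have "\<dots> \<le> g1 * N * (1 / r + 1 / q)"
    proof -
      have "integral\<^sup>L M01 (\<lambda>t. \<bar>h t\<bar> powr r) / g1 powr r \<le> 1" using hrl gp by simp
      then have "(integral\<^sup>L M01 (\<lambda>t. \<bar>h t\<bar> powr r) / g1 powr r) / r \<le> 1 / r" by (rule divide_right_mono) (use r in simp)
      moreover have "integral\<^sup>L M01 (\<lambda>t. dg n t powr q) / N powr q = 1" using dgq Nq Nqp by (simp only: divide_self)
      ultimately show ?thesis using gp Np by (intro mult_left_mono) auto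
    qed
    also have "\<dots> = g1 * N" using cf by simp
    finally show ?thesis .
  qed
  also have "g1 * N = g1 / (2 * (q + 1) powr (1 / q) * real n)" by (simp add: N_def C_def field_simps)
  finally show "integrable M01 h \<and> \<bar>integral\<^sup>L M01 (\<lambda>t. h t * Dk n (mp_nodes n) t)\<bar> \<le> g1 / (2 * (q + 1) powr (1 / q) * real n)"
    using hi by simp
qed


lemma LB_r:
  assumes k: "k \<ge> 1" and g0: "g0 \<ge> 0" and g1: "g1 \<ge> 0" and r: "r > 1"
  defines "q \<equiv> r / (r - 1)"
  shows "ereal (g1 / (2 * (q + 1) powr (1 / q) * real k)) \<le> qmc_error (ereal r) g0 g1 k x"
proof (cases "g1 = 0")
  case True then show ?thesis using LB_zero[OF k g0 g1, of "ereal r" x] by (simp add: zero_ereal_def)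
next
  case False
  note cf = conj_facts[OF r, folded q_def]
  then have gp: "g1 > 0" using g1 False by simp
  have kp: "real k > 0" using k by simp
  define c where "c = 1 / (2 * real k)"
  have cp: "c > 0" using kp by (simp add: c_def)
  define B where "B = c powr q / (q + 1)"
  have Bp: "B > 0" using cp cf by (simp add: B_def)
  define s where "s = g1 * B powr (- 1 / r)"
  have s: "s \<ge> 0" using g1 by (simp add: s_def)
  define r0 where "r0 = q - 1"
  have r0: "r0 > 0" using cf by (simp add: r0_def)
  define h where "h = (\<lambda>t. s * sgn (Dk k x t) * dg k t powr r0)"
  note SH0 = sgn_h[OF k r0 s, of x]
  have SH: "h \<in> borel_measurable M01" "integrable M01 h" "\<And>t. \<bar>h t\<bar> = s * dg k t powr r0"
    "integral\<^sup>L M01 (\<lambda>t. h t * Dk k x t) \<ge> s * ((1 / (2 * real k)) powr (r0 + 1) / (r0 + 2))"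
    unfolding h_def using SH0 by auto
  have habs: "\<bar>h t\<bar> powr r = s powr r * dg k t powr q" for t
  proof -
    have "\<bar>h t\<bar> powr r = s powr r * (dg k t powr r0) powr r"
      unfolding SH(3) using s dg_nonneg[of k t] by (simp add: powr_mult)
    also have "(dg k t powr r0) powr r = dg k t powr q"
      using cf(3) by (simp add: powr_powr r0_def)
    finally show ?thesis .
  qed
  have sr: "s powr r * B = g1 powr r"
  proof -
    have "s powr r = g1 powr r * (B powr (-1 / r)) powr r" using g1 Bp by (simp add: s_def powr_mult)
    also have "(B powr (-1 / r)) powr r = B powr (-1)" using r by (simp add: powr_powr)
    finally show ?thesis using Bp by (simp add: powr_minus field_simps)
  qed
  have dgi: "integrable M01 (\<lambda>t. dg k t powr q)" "integral\<^sup>L M01 (\<lambda>t. dg k t powr q) = B"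
    using dg_leb[OF k, of q] cf by (auto simp: B_def c_def)
  have int_sd: "integrable M01 (\<lambda>t. s powr r * dg k t powr q)" using dgi by simp
  have "(\<integral>\<^sup>+ t. ennreal (\<bar>h t\<bar> powr r) \<partial>M01) = ennreal (integral\<^sup>L M01 (\<lambda>t. s powr r * dg k t powr q))"
    unfolding habs by (rule nn_integral_eq_integral[OF int_sd]) auto
  also have "integral\<^sup>L M01 (\<lambda>t. s powr r * dg k t powr q) = g1 powr r"
    using dgi sr by simp
  finally have "wterm r g1 (\<integral>\<^sup>+ t. ennreal (\<bar>h t\<bar> powr r) \<partial>M01) \<le> 1"
    using gp by (simp add: wterm_pos_iff)
  then have b: "bcond (ereal r) g1 h" by (simp add: bcond_def)
  have "g1 / (2 * (q + 1) powr (1 / q) * real k) = s * B"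
  proof -
    have "s * B = g1 * B powr (1 - 1 / r)"
      using Bp by (simp add: s_def powr_diff powr_minus field_simps)
    also have "B powr (1 - 1 / r) = B powr (1 / q)" using cf(4) by simp
    also have "B powr (1 / q) = c / (q + 1) powr (1 / q)"
      using cp cf by (simp add: B_def powr_divide powr_powr)
    finally show ?thesis by (simp add: c_def field_simps)
  qed
  also have "s * B = s * ((1 / (2 * real k)) powr (r0 + 1) / (r0 + 2))"
    by (simp add: B_def c_def r0_def add.commute)
  also have "\<dots> \<le> integral\<^sup>L M01 (\<lambda>t. h t * Dk k x t)" by (rule SH(4))
  also have "\<dots> \<le> \<bar>integral\<^sup>L M01 (\<lambda>t. h t * Dk k x t)\<bar>" by simp
  finally have "ereal (g1 / (2 * (q + 1) powr (1 / q) * real k)) \<le> ereal \<bar>integral\<^sup>L M01 (\<lambda>t. h t * Dk k x t)\<bar>"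
    by simp
  also have "\<dots> \<le> qmc_error (ereal r) g0 g1 k x" by (rule err_ge[OF SH(1) b g0 SH(2) k])
  finally show ?thesis .
qed


lemma mpc_inf: "mp_const \<infinity> = 2"
  by (simp add: mp_const_def conj_exp_def)

lemma mpc_one: "mp_const 1 = 1"
  by (simp add: mp_const_def conj_exp_def)

lemma mpc_r: assumes r: "r > 1"
  shows "mp_const (ereal r) = (r / (r - 1) + 1) powr (1 / (r / (r - 1)))"
proof -
  have "conj_exp (ereal r) = ereal (r / (r - 1))"
    using r by (simp add: conj_exp_def one_ereal_def)
  then show ?thesis by (simp add: mp_const_def)
qed

lemma bounds:
  assumes p: "1 \<le> p" and g0: "g0 \<ge> 0" and g1: "g1 \<ge> 0" and n: "n \<ge> 1"
  shows "mp_const p > 0"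
    "qmc_error p g0 g1 n (mp_nodes n) \<le> ereal (g1 / (2 * mp_const p * real n))"
    "\<And>k x. k \<ge> 1 \<Longrightarrow> ereal (g1 / (2 * mp_const p * real k)) \<le> qmc_error p g0 g1 k x"
proof -
  have "mp_const p > 0 \<and> qmc_error p g0 g1 n (mp_nodes n) \<le> ereal (g1 / (2 * mp_const p * real n)) \<and>
    (\<forall>k x. k \<ge> 1 \<longrightarrow> ereal (g1 / (2 * mp_const p * real k)) \<le> qmc_error p g0 g1 k x)"
  proof (cases p)
    case PInf
    then show ?thesis using UB_inf[OF n g1, of g0] LB_inf[OF _ g0 g1] by (simp add: mpc_inf)
  next
    case MInf with p show ?thesis by simp
  next
    case (real r)
    with p have r1: "r \<ge> 1" by simp
    show ?thesis
    proof (cases "r = 1")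
      case True
      then have pe: "p = 1" using real by (simp add: one_ereal_def)
      show ?thesis unfolding pe mpc_one using UB_one[OF n g1, of g0] LB_one[OF _ g0 g1] by simp
    next
      case False
      then have r: "r > 1" using r1 by simp
      have qp: "r / (r - 1) + 1 > 0" using r by (simp add: add_pos_pos)
      show ?thesis unfolding real mpc_r[OF r] using UB_r[OF n g1 r, of g0] LB_r[OF _ g0 g1 r] qp by simp
    qed
  qed
  then show "mp_const p > 0"
    "qmc_error p g0 g1 n (mp_nodes n) \<le> ereal (g1 / (2 * mp_const p * real n))"
    "\<And>k x. k \<ge> 1 \<Longrightarrow> ereal (g1 / (2 * mp_const p * real k)) \<le> qmc_error p g0 g1 k x"
    by auto
qed

theorem mainTheorem6:
  fixes p :: ereal and g0 g1 :: real and n :: nat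
  assumes "1 \<le> p" and "g0 \<ge> 0" and "g1 \<ge> 0" and "n \<ge> 1"
  shows "qmc_error p g0 g1 n (mp_nodes n) = ereal (g1 / (2 * mp_const p * real n))
    \<and> (\<forall>j\<in>{1..n}. mp_nodes n j \<in> {0..1})
    \<and> (\<forall>k x. 1 \<le> k \<and> k \<le> n \<and> (\<forall>j\<in>{1..k}. x j \<in> {0..1}) \<longrightarrow>
          qmc_error p g0 g1 n (mp_nodes n) \<le> qmc_error p g0 g1 k x)"
proof -
  note B = bounds[OF assms]
  have eq: "qmc_error p g0 g1 n (mp_nodes n) = ereal (g1 / (2 * mp_const p * real n))"
    using B(2) B(3)[OF assms(4), of "mp_nodes n"] by (rule antisym)
  have nodes: "\<forall>j\<in>{1..n}. mp_nodes n j \<in> {0..1}"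
    using assms(4) by (auto simp: mp_nodes_def field_simps)
  have cmp: "qmc_error p g0 g1 n (mp_nodes n) \<le> qmc_error p g0 g1 k x" if k: "1 \<le> k" "k \<le> n" for k x
  proof -
    have "g1 / (2 * mp_const p * real n) \<le> g1 / (2 * mp_const p * real k)"
      using B(1) k assms(3) by (intro divide_left_mono mult_mono) auto
    then have "ereal (g1 / (2 * mp_const p * real n)) \<le> ereal (g1 / (2 * mp_const p * real k))" by simp
    also have "\<dots> \<le> qmc_error p g0 g1 k x" by (rule B(3)[OF k(1)])
    finally show ?thesis unfolding eq .
  qed
  show ?thesis using eq nodes cmp by blast
qed

end
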